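(* For all integers $m,n\ge 1$, the lexicographic product $K_{4m}\circ\overline{K_{2n+1}}$ (an odd-regular graph on $4m(2n+1)$ vertices) is orientable $\mathbb{Z}_{4m(2n+1)}$-distance magic.
   Context: For graphs $G,H$, the lexicographic product $G\circ H$ has vertex set $V(G)\times V(H)$, with $(g,h)$ adjacent to $(g',h')$ iff $g$ is adjacent to $g'$ in $G$, or $g=g'$ and $h$ is adjacent to $h'$ in $H$. $\overline{K_n}$ denotes the edgeless graph on $n$ vertices. For an oriented graph $\vec G$ and a vertex $x$, $N^+(x)$ is the set of vertices $y$ with an arc from $x$ to $y$, and $N^-(x)$ is the set of vertices $y$ with an arc from $y$ to $x$. For an Abelian group $\Gamma$ of order $n$, a directed $\Gamma$-distance magic labeling of an oriented graph $\vec G$ of order $n$ is a bijection $\vec l:V\to\Gamma$ such that there is $\mu\in\Gamma$ with $\sum_{y\in N^+(x)}\vec l(y)-\sum_{y\in N^-(x)}\vec l(y)=\mu$ for every vertex $x$. A simple graph $G$ of order $n$ is orientable $\Gamma$-distance magic if some orientation of its edges admits a directed $\Gamma$-distance magic labeling. $\mathbb{Z}_n$ is the cyclic group of integers modulo $n$. *)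

theory Defs
  imports "HOL-Number_Theory.Cong"
begin

definition simple_graph :: "'a set \<Rightarrow> ('a \<Rightarrow> 'a \<Rightarrow> bool) \<Rightarrow> bool" where
  "simple_graph V E \<longleftrightarrow> finite V \<and>
     (\<forall>x y. E x y \<longrightarrow> x \<in> V \<and> y \<in> V) \<and>
     (\<forall>x. \<not> E x x) \<and> (\<forall>x y. E x y \<longrightarrow> E y x)"

definition complete_graph_E :: "nat \<Rightarrow> nat \<Rightarrow> nat \<Rightarrow> bool" where
  "complete_graph_E k x y \<longleftrightarrow> x < k \<and> y < k \<and> x \<noteq> y"

definition edgeless_graph_E :: "nat \<Rightarrow> nat \<Rightarrow> nat \<Rightarrow> bool" where
  "edgeless_graph_E k x y \<longleftrightarrow> False"

definition lex_prod_V :: "'a set \<Rightarrow> 'b set \<Rightarrow> ('a \<times> 'b) set" where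
  "lex_prod_V VG VH = VG \<times> VH"

definition lex_prod_E :: "'a set \<Rightarrow> ('a \<Rightarrow> 'a \<Rightarrow> bool) \<Rightarrow> 'b set \<Rightarrow> ('b \<Rightarrow> 'b \<Rightarrow> bool)
    \<Rightarrow> ('a \<times> 'b) \<Rightarrow> ('a \<times> 'b) \<Rightarrow> bool" where
  "lex_prod_E VG EG VH EH p q \<longleftrightarrow>
     p \<in> VG \<times> VH \<and> q \<in> VG \<times> VH \<and>
     (EG (fst p) (fst q) \<or> (fst p = fst q \<and> EH (snd p) (snd q)))"

definition orientation :: "('a \<Rightarrow> 'a \<Rightarrow> bool) \<Rightarrow> ('a \<Rightarrow> 'a \<Rightarrow> bool) \<Rightarrow> bool" where
  "orientation E D \<longleftrightarrow>
     (\<forall>x y. D x y \<longrightarrow> E x y) \<and>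
     (\<forall>x y. E x y \<longrightarrow> (D x y \<or> D y x)) \<and>
     (\<forall>x y. D x y \<longrightarrow> \<not> D y x)"

definition out_nbrs :: "'a set \<Rightarrow> ('a \<Rightarrow> 'a \<Rightarrow> bool) \<Rightarrow> 'a \<Rightarrow> 'a set" where
  "out_nbrs V D x = {y \<in> V. D x y}"

definition in_nbrs :: "'a set \<Rightarrow> ('a \<Rightarrow> 'a \<Rightarrow> bool) \<Rightarrow> 'a \<Rightarrow> 'a set" where
  "in_nbrs V D x = {y \<in> V. D y x}"

text \<open>Directed Z_n-distance magic labeling of the oriented graph (V,D), n = |V|.
  Z_n is represented by residues {0..<n} of int, with arithmetic mod n.\<close>
definition directed_Zn_distance_magic_labeling ::
    "'a set \<Rightarrow> ('a \<Rightarrow> 'a \<Rightarrow> bool) \<Rightarrow> ('a \<Rightarrow> int) \<Rightarrow> bool" where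
  "directed_Zn_distance_magic_labeling V D l \<longleftrightarrow>
     bij_betw l V {0..<int (card V)} \<and>
     (\<exists>\<mu>. \<forall>x\<in>V.
        [(\<Sum>y\<in>out_nbrs V D x. l y) - (\<Sum>y\<in>in_nbrs V D x. l y) = \<mu>] (mod int (card V)))"

definition orientable_Zn_distance_magic :: "'a set \<Rightarrow> ('a \<Rightarrow> 'a \<Rightarrow> bool) \<Rightarrow> bool" where
  "orientable_Zn_distance_magic V E \<longleftrightarrow>
     (\<exists>D l. orientation E D \<and> directed_Zn_distance_magic_labeling V D l)"

end

theory Submission
  imports Defs
begin

definition w2 :: "nat \<Rightarrow> nat \<Rightarrow> nat" where
  "w2 m i = (if i < 2*m then i else if i = 2*m then 4*m-1 else i-1)"

definition w3 :: "nat \<Rightarrow> nat \<Rightarrow> nat" where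
  "w3 m i = (if i < 2*m then 4*m-1-2*i else if i = 2*m then 2*m else if i = 3*m then 0 else 8*m-2*i)"

definition gg :: "nat \<Rightarrow> nat \<Rightarrow> nat \<Rightarrow> nat" where
  "gg m j i = (if j=0 then i else if j=1 then w2 m i else if j=2 then w3 m i
               else if odd j then i else 4*m-1-i)"

definition rs :: "nat \<Rightarrow> nat \<Rightarrow> nat" where
  "rs n j = (if j=0 then 0 else if j=1 then 1 else if j=2 then 2*n
             else if odd j then (j+1) div 2 else 2*n+1 - j div 2)"

definition lab :: "nat \<Rightarrow> nat \<Rightarrow> nat \<times> nat \<Rightarrow> int" where
  "lab m n x = int ((2*n+1) * gg m (snd x) (fst x) + rs n (snd x))"

lemma w2_lt: "m \<ge> 1 \<Longrightarrow> i < 4*m \<Longrightarrow> w2 m i < 4*m"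
  unfolding w2_def by auto

lemma w3_lt: "m \<ge> 1 \<Longrightarrow> i < 4*m \<Longrightarrow> w3 m i < 4*m"
  unfolding w3_def by auto

lemma w2_inj: "m \<ge> 1 \<Longrightarrow> i < 4*m \<Longrightarrow> i' < 4*m \<Longrightarrow> w2 m i = w2 m i' \<Longrightarrow> i = i'"
  unfolding w2_def by (auto split: if_splits)

lemma w3_inj: assumes "m \<ge> 1" "i < 4*m" "i' < 4*m" "w3 m i = w3 m i'" shows "i = i'"
proof -
  have lo: "k < 2*m \<Longrightarrow> w3 m k = 2*(2*m-k-1) + 1" for k unfolding w3_def by simp
  define h where "h k = (if k = 2*m then m else if k = 3*m then 0 else 4*m-k)" for k
  have hi: "\<not> k < 2*m \<Longrightarrow> k < 4*m \<Longrightarrow> w3 m k = 2 * h k" for k unfolding w3_def h_def by auto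
  have odd_even: "2*a+1 \<noteq> 2*(b::nat)" for a b by presburger
  show ?thesis
  proof (cases "i < 2*m")
    case True
    show ?thesis
    proof (cases "i' < 2*m")
      case True
      then show ?thesis using `i < 2*m` assms(4) lo by auto
    next
      case False
      then show ?thesis using `i < 2*m` assms lo hi odd_even by metis
    qed
  next
    case False
    show ?thesis
    proof (cases "i' < 2*m")
      case True
      then show ?thesis using False assms lo hi odd_even by metis
    next
      case F2: False
      have "h i = h i'" using False F2 assms hi by auto
      then show ?thesis using False F2 assms unfolding h_def by (auto split: if_splits)
    qed
  qed
qed

lemma gg_lt: "m \<ge> 1 \<Longrightarrow> i < 4*m \<Longrightarrow> gg m j i < 4*m"
  unfolding gg_def using w2_lt w3_lt by auto

lemma gg_inj: assumes "m \<ge> 1" "i < 4*m" "i' < 4*m" "gg m j i = gg m j i'" shows "i = i'"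
proof -
  consider "j = 0" | "j = 1" | "j = 2" | "j \<ge> 3" "odd j" | "j \<ge> 3" "even j" by linarith
  then show ?thesis
  proof cases
    case 1 then show ?thesis using assms by (simp add: gg_def)
  next
    case 2 then show ?thesis using assms w2_inj by (simp add: gg_def)
  next
    case 3 then show ?thesis using assms w3_inj by (simp add: gg_def)
  next
    case 4 then show ?thesis using assms by (simp add: gg_def)
  next
    case 5 then show ?thesis using assms by (simp add: gg_def)
  qed
qed

lemma rs_lt: "n \<ge> 1 \<Longrightarrow> j < 2*n+1 \<Longrightarrow> rs n j < 2*n+1"
  unfolding rs_def by auto

definition rsinv :: "nat \<Rightarrow> nat \<Rightarrow> nat" where
  "rsinv n r = (if r = 0 then 0 else if r = 1 then 1 else if r = 2*n then 2
                else if r \<le> n then 2*r - 1 else 2*(2*n+1-r))"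

lemma rs_rsinv: assumes "n \<ge> 1" "j < 2*n+1" shows "rsinv n (rs n j) = j"
proof -
  consider "j = 0" | "j = 1" | "j = 2" | "j \<ge> 3" "odd j" | "j \<ge> 3" "even j" by linarith
  then show ?thesis
  proof cases
    case 1 then show ?thesis by (simp add: rs_def rsinv_def)
  next
    case 2 then show ?thesis by (simp add: rs_def rsinv_def)
  next
    case 3 then show ?thesis using assms by (simp add: rs_def rsinv_def)
  next
    case 4
    then obtain a where a: "j = 2*a+1" by (auto elim: oddE)
    have a1: "a \<ge> 1" "a < n" using 4 a assms by auto
    have "rs n j = a + 1" using 4 a by (simp add: rs_def)
    then show ?thesis using a a1 by (simp add: rsinv_def)
  next
    case 5
    then obtain b where b: "j = 2*b" by (auto elim: evenE)
    have b1: "b \<ge> 2" "b \<le> n" using 5 b assms by auto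
    have r: "rs n j = 2*n+1-b" using 5 b by (simp add: rs_def)
    have "2*n+1-b > n" "2*n+1-b \<noteq> 2*n" "2*n+1-b \<noteq> 0" "2*n+1-b \<noteq> 1"
      "2*(2*n+1-(2*n+1-b)) = 2*b" using b1 by arith+
    then show ?thesis using b r unfolding rsinv_def by simp
  qed
qed

lemma rs_inj: "n \<ge> 1 \<Longrightarrow> j < 2*n+1 \<Longrightarrow> j' < 2*n+1 \<Longrightarrow> rs n j = rs n j' \<Longrightarrow> j = j'"
  by (metis rs_rsinv)

lemma lab_bound: assumes "m \<ge> 1" "n \<ge> 1" "i < 4*m" "j < 2*n+1"
  shows "(2*n+1) * gg m j i + rs n j < 4*m*(2*n+1)"
proof -
  have "gg m j i < 4*m" by (rule gg_lt[OF assms(1,3)])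
  then have g: "gg m j i + 1 \<le> 4*m" by simp
  have "(2*n+1) * gg m j i + rs n j < (2*n+1) * gg m j i + (2*n+1)"
    using rs_lt[OF assms(2,4)] by simp
  also have "\<dots> = (2*n+1) * (gg m j i + 1)" by simp
  also have "\<dots> \<le> (2*n+1) * (4*m)" using g by (rule mult_le_mono2)
  finally show ?thesis by (metis mult.commute)
qed

lemma divmod_eq: assumes "(b::nat) < q" "d < q" "q*a + b = q*c + d" shows "a = c \<and> b = d"
proof -
  have "b = (q*a + b) mod q" using assms(1) by simp
  also have "\<dots> = (q*c + d) mod q" by (simp only: assms(3))
  also have "\<dots> = d" using assms(2) by simp
  finally have bd: "b = d" .
  then have "q*a = q*c" using assms(3) by simp
  then show ?thesis using bd assms(1) by simp
qed

lemma lab_inj: assumes "m \<ge> 1" "n \<ge> 1"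
  shows "inj_on (lab m n) ({0..<4*m} \<times> {0..<2*n+1})"
proof (rule inj_onI)
  fix x y assume x: "x \<in> {0..<4*m} \<times> {0..<2*n+1}" and y: "y \<in> {0..<4*m} \<times> {0..<2*n+1}"
    and e: "lab m n x = lab m n y"
  obtain i j where ij: "x = (i,j)" by (cases x)
  obtain i' j' where ij': "y = (i',j')" by (cases y)
  have r: "i < 4*m" "j < 2*n+1" "i' < 4*m" "j' < 2*n+1" using x y ij ij' by auto
  have "int ((2*n+1) * gg m j i + rs n j) = int ((2*n+1) * gg m j' i' + rs n j')"
    using e unfolding ij ij' lab_def fst_conv snd_conv .
  then have "(2*n+1) * gg m j i + rs n j = (2*n+1) * gg m j' i' + rs n j'"
    using of_nat_eq_iff by blast
  then have "gg m j i = gg m j' i' \<and> rs n j = rs n j'"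
    using divmod_eq rs_lt[OF assms(2) r(2)] rs_lt[OF assms(2) r(4)] by blast
  then have jj: "j = j'" and "gg m j i = gg m j i'" using rs_inj[OF assms(2) r(2) r(4)] by auto
  then have "i = i'" using gg_inj[OF assms(1) r(1) r(3)] by simp
  then show "x = y" using ij ij' jj by simp
qed

lemma lab_bij: assumes "m \<ge> 1" "n \<ge> 1"
  shows "bij_betw (lab m n) ({0..<4*m} \<times> {0..<2*n+1}) {0..<int (card ({0..<4*m} \<times> {0..<2*n+1}))}"
proof -
  let ?V = "{0..<4*m} \<times> {0..<2*n+1}"
  have cV: "card ?V = 4*m*(2*n+1)" by (simp add: card_cartesian_product)
  have sub: "lab m n ` ?V \<subseteq> {0..<int (4*m*(2*n+1))}"
  proof
    fix z assume "z \<in> lab m n ` ?V"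
    then obtain i j where ij: "i < 4*m" "j < 2*n+1" "z = lab m n (i,j)" by auto
    define A where "A = (2*n+1) * gg m j i + rs n j"
    have zA: "z = int A" using ij unfolding lab_def A_def by simp
    have "A < 4*m*(2*n+1)" using lab_bound[OF assms ij(1,2)] unfolding A_def .
    then show "z \<in> {0..<int (4*m*(2*n+1))}"
      unfolding zA by (simp only: atLeastLessThan_iff of_nat_0_le_iff of_nat_less_iff simp_thms)
  qed
  have ci: "card (lab m n ` ?V) = 4*m*(2*n+1)"
    using card_image[OF lab_inj[OF assms]] cV by simp
  have ck: "card {0..<int k} = k" for k :: nat by simp
  have "lab m n ` ?V = {0..<int (4*m*(2*n+1))}"
    by (rule card_subset_eq) (use sub ci ck[of "4*m*(2*n+1)"] in auto)
  then show ?thesis using lab_inj[OF assms] cV unfolding bij_betw_def by simp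
qed

definition Dor :: "nat \<Rightarrow> nat \<Rightarrow> nat \<times> nat \<Rightarrow> nat \<times> nat \<Rightarrow> bool" where
  "Dor m n x y = (x \<in> {0..<4*m} \<times> {0..<2*n+1} \<and> y \<in> {0..<4*m} \<times> {0..<2*n+1} \<and> fst x \<noteq> fst y \<and>
     (fst x < fst y \<longleftrightarrow> (x \<noteq> (3*m,0) \<and> y \<noteq> (3*m,0))))"

lemma E_iff: "lex_prod_E {0..<4*m} (complete_graph_E (4*m)) {0..<2*n+1} (edgeless_graph_E (2*n+1)) x y \<longleftrightarrow>
   (x \<in> {0..<4*m} \<times> {0..<2*n+1} \<and> y \<in> {0..<4*m} \<times> {0..<2*n+1} \<and> fst x \<noteq> fst y)"
  unfolding lex_prod_E_def complete_graph_E_def edgeless_graph_E_def by auto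

lemma Dor_orient: "orientation (lex_prod_E {0..<4*m} (complete_graph_E (4*m)) {0..<2*n+1} (edgeless_graph_E (2*n+1))) (Dor m n)"
  unfolding orientation_def E_iff Dor_def by auto

definition rho :: "nat \<Rightarrow> nat \<Rightarrow> int" where
  "rho a b = (if a < b then 1 else -1)"

definition ff :: "nat \<Rightarrow> nat \<times> nat \<Rightarrow> int" where
  "ff m x = (if x = (3*m,0) then -1 else 1)"

definition Wb :: "nat \<Rightarrow> nat \<Rightarrow> nat \<Rightarrow> int" where
  "Wb m n i = (\<Sum>j\<in>{0..<2*n+1}. ff m (i,j) * lab m n (i,j))"

lemma tail_pair: assumes "i < 4*m" "k + 1 \<le> n"
  shows "lab m n (i, 2*k+3) + lab m n (i, 2*k+4) = int (4*m*(2*n+1))"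
proof -
  have o: "odd (2*k+3)" "\<not> odd (2*k+4)" by simp_all
  have g1: "gg m (2*k+3) i = i" using o unfolding gg_def by simp
  have g2: "gg m (2*k+4) i = 4*m-1-i" using o unfolding gg_def by simp
  have r1: "rs n (2*k+3) = k+2" using o unfolding rs_def by simp
  have r2: "rs n (2*k+4) = 2*n+1-(k+2)" using o unfolding rs_def by simp
  have i1: "i + (4*m-1-i) = 4*m-1" using assms(1) by arith
  have e1: "(2*n+1)*i + (2*n+1)*(4*m-1-i) = (2*n+1)*(4*m-1)"
    by (metis add_mult_distrib2 i1)
  have e2: "(k+2) + (2*n+1-(k+2)) = 2*n+1" using assms(2) by simp
  have i2: "4*m-1+1 = 4*m" using assms(1) by arith
  have "(2*n+1)*(4*m-1) + (2*n+1) = (2*n+1)*(4*m-1+1)" by (simp only: add_mult_distrib2 mult_1_right)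
  then have e3: "(2*n+1)*(4*m-1) + (2*n+1) = 4*m*(2*n+1)" by (metis i2 mult.commute)
  have "(2*n+1) * i + (k+2) + ((2*n+1) * (4*m-1-i) + (2*n+1-(k+2))) = 4*m*(2*n+1)"
    using e1 e2 e3 by (simp add: algebra_simps)
  then have "int ((2*n+1) * i + (k+2)) + int ((2*n+1) * (4*m-1-i) + (2*n+1-(k+2))) = int (4*m*(2*n+1))"
    by (metis of_nat_add)
  then show ?thesis unfolding lab_def using g1 g2 r1 r2 by simp
qed

lemma tail_sum: assumes "i < 4*m"
  shows "k \<le> n \<Longrightarrow> (\<Sum>j\<in>{3..<2*k+3}. lab m n (i,j)) = int (k * (4*m*(2*n+1)))"
proof (induction k)
  case 0
  then show ?case by simp
next
  case (Suc k)
  have eq: "2*Suc k + 3 = Suc (Suc (2*k+3))" by simp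
  have h: "a \<le> b \<Longrightarrow> sum f {a..<Suc (Suc b)} = sum f {a..<b} + f b + f (Suc b)" for a b and f :: "nat \<Rightarrow> int"
    by simp
  have "(\<Sum>j\<in>{3..<2*Suc k+3}. lab m n (i,j)) = (\<Sum>j\<in>{3..<2*k+3}. lab m n (i,j)) + lab m n (i, 2*k+3) + lab m n (i, Suc (2*k+3))"
    unfolding eq by (rule h) simp
  also have "Suc (2*k+3) = 2*k+4" by simp
  finally have "(\<Sum>j\<in>{3..<2*Suc k+3}. lab m n (i,j)) = (\<Sum>j\<in>{3..<2*k+3}. lab m n (i,j)) + lab m n (i, 2*k+3) + lab m n (i, 2*k+4)" .
  also have "\<dots> = int (k * (4*m*(2*n+1))) + int (4*m*(2*n+1))"
    using Suc tail_pair[OF assms, of k] by (simp add: add.assoc)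
  also have "\<dots> = int (Suc k * (4*m*(2*n+1)))" by simp
  finally show ?case .
qed

lemma head_sum: assumes "m \<ge> 1" "i < 4*m"
  shows "int (4*m*(2*n+1)) dvd (ff m (i,0) * lab m n (i,0) + lab m n (i,1) + lab m n (i,2))"
proof -
  have l0: "lab m n (i,0) = int ((2*n+1) * i)" unfolding lab_def gg_def rs_def by simp
  have l1: "lab m n (i,1) = int ((2*n+1) * w2 m i + 1)" unfolding lab_def gg_def rs_def by simp
  have l2: "lab m n (i,2) = int ((2*n+1) * w3 m i + 2*n)" unfolding lab_def gg_def rs_def by simp
  show ?thesis
  proof (cases "i = 3*m")
    case True
    have w2e: "w2 m i = 3*m - 1" using True assms unfolding w2_def by auto
    have w3e: "w3 m i = 0" using True assms unfolding w3_def by auto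
    have f: "ff m (i,0) = -1" using True unfolding ff_def by simp
    have a: "(2*n+1) * (3*m-1) + (2*n+1) = (2*n+1) * (3*m)"
    proof -
      have "3*m-1+1 = 3*m" using assms(1) by arith
      moreover have "(2*n+1) * (3*m-1) + (2*n+1) = (2*n+1) * (3*m-1+1)"
        by (simp only: add_mult_distrib2 mult_1_right)
      ultimately show ?thesis by simp
    qed
    have "int ((2*n+1) * (3*m-1) + 1) + int ((2*n+1) * 0 + 2*n) = int ((2*n+1) * (3*m))"
      using a by (simp only: of_nat_add[symmetric])
    then have "ff m (i,0) * lab m n (i,0) + lab m n (i,1) + lab m n (i,2) = 0"
      unfolding f l0 l1 l2 w2e w3e using True by simp
    then show ?thesis by simp
  next
    case False
    have f: "ff m (i,0) = 1" using False unfolding ff_def by simp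
    obtain c where c: "i + w2 m i + w3 m i + 1 = 4*m*c"
    proof (cases "i < 2*m")
      case True
      then have "i + w2 m i + w3 m i + 1 = 4*m*1" unfolding w2_def w3_def by simp
      then show ?thesis using that by blast
    next
      case F: False
      have "i + w2 m i + w3 m i + 1 = 4*m*2" using F False assms unfolding w2_def w3_def by auto
      then show ?thesis using that by blast
    qed
    have "(2*n+1) * i + ((2*n+1) * w2 m i + 1) + ((2*n+1) * w3 m i + 2*n) = (2*n+1) * (i + w2 m i + w3 m i + 1)"
      by (simp add: algebra_simps)
    also have "\<dots> = 4*m*(2*n+1) * c" using c by (simp add: algebra_simps)
    finally have e: "(2*n+1) * i + ((2*n+1) * w2 m i + 1) + ((2*n+1) * w3 m i + 2*n) = 4*m*(2*n+1) * c" .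
    have "ff m (i,0) * lab m n (i,0) + lab m n (i,1) + lab m n (i,2)
        = int ((2*n+1) * i + ((2*n+1) * w2 m i + 1) + ((2*n+1) * w3 m i + 2*n))"
      unfolding f l0 l1 l2 by simp
    also have "\<dots> = int (4*m*(2*n+1)) * int c" unfolding e by simp
    finally show ?thesis by simp
  qed
qed

lemma Wb_dvd: assumes "m \<ge> 1" "n \<ge> 1" "i < 4*m"
  shows "int (4*m*(2*n+1)) dvd Wb m n i"
proof -
  have split: "{0..<2*n+1} = {0..<3} \<union> {3..<2*n+1}" using assms(2) by auto
  have "Wb m n i = (\<Sum>j\<in>{0..<3}. ff m (i,j) * lab m n (i,j)) + (\<Sum>j\<in>{3..<2*n+1}. ff m (i,j) * lab m n (i,j))"
    unfolding Wb_def split by (rule sum.union_disjoint) auto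
  also have "(\<Sum>j\<in>{0..<3}. ff m (i,j) * lab m n (i,j)) = ff m (i,0) * lab m n (i,0) + lab m n (i,1) + lab m n (i,2)"
    by (simp add: numeral_3_eq_3 numeral_2_eq_2 ff_def)
  also have "(\<Sum>j\<in>{3..<2*n+1}. ff m (i,j) * lab m n (i,j)) = (\<Sum>j\<in>{3..<2*(n-1)+3}. lab m n (i,j))"
  proof -
    have "2*n+1 = 2*(n-1)+3" using assms(2) by simp
    then have A: "{3..<2*n+1} = {3..<2*(n-1)+3}" by (rule arg_cong)
    show ?thesis unfolding A[symmetric] by (rule sum.cong) (auto simp: ff_def)
  qed
  also have "\<dots> = int ((n-1) * (4*m*(2*n+1)))" using tail_sum[OF assms(3)] by simp
  finally show ?thesis using head_sum[OF assms(1,3), of n] by simp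
qed

lemma value_dvd: assumes "m \<ge> 1" "n \<ge> 1" "x \<in> {0..<4*m} \<times> {0..<2*n+1}"
  shows "int (4*m*(2*n+1)) dvd
    ((\<Sum>y\<in>out_nbrs ({0..<4*m} \<times> {0..<2*n+1}) (Dor m n) x. lab m n y)
     - (\<Sum>y\<in>in_nbrs ({0..<4*m} \<times> {0..<2*n+1}) (Dor m n) x. lab m n y))"
proof -
  let ?V = "{0..<4*m} \<times> {0..<2*n+1}"
  obtain i j where x: "x = (i,j)" by (cases x)
  have ij: "i < 4*m" "j < 2*n+1" using assms(3) x by auto
  define A where "A = {0..<4*m} - {i}"
  define Nb where "Nb = A \<times> {0..<2*n+1}"
  have finNb: "finite Nb" unfolding Nb_def A_def by simp
  have out: "out_nbrs ?V (Dor m n) x = Nb \<inter> {y. Dor m n x y}"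
    unfolding out_nbrs_def Nb_def A_def using assms(3) x by (auto simp: Dor_def)
  have inn: "in_nbrs ?V (Dor m n) x = Nb \<inter> - {y. Dor m n x y}"
    unfolding in_nbrs_def Nb_def A_def using assms(3) x by (auto simp: Dor_def)
  have "(\<Sum>y\<in>Nb. if Dor m n x y then lab m n y else - lab m n y)
      = (\<Sum>y\<in>Nb \<inter> {y. Dor m n x y}. lab m n y) + (\<Sum>y\<in>Nb \<inter> - {y. Dor m n x y}. - lab m n y)"
    by (rule sum.If_cases[OF finNb])
  also have "\<dots> = (\<Sum>y\<in>out_nbrs ?V (Dor m n) x. lab m n y) - (\<Sum>y\<in>in_nbrs ?V (Dor m n) x. lab m n y)"
    unfolding out inn by (simp add: sum_negf)
  finally have e1: "(\<Sum>y\<in>out_nbrs ?V (Dor m n) x. lab m n y) - (\<Sum>y\<in>in_nbrs ?V (Dor m n) x. lab m n y)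
      = (\<Sum>y\<in>Nb. if Dor m n x y then lab m n y else - lab m n y)" by simp
  have e2: "(\<Sum>y\<in>Nb. if Dor m n x y then lab m n y else - lab m n y)
      = (\<Sum>y\<in>Nb. rho i (fst y) * ff m x * (ff m y * lab m n y))"
  proof (rule sum.cong)
    fix y assume y: "y \<in> Nb"
    obtain i' j' where y': "y = (i',j')" by (cases y)
    have yy: "i' < 4*m" "i' \<noteq> i" "j' < 2*n+1" using y y' unfolding Nb_def A_def by auto
    show "(if Dor m n x y then lab m n y else - lab m n y) = rho i (fst y) * ff m x * (ff m y * lab m n y)"
      using yy ij unfolding x y' Dor_def rho_def ff_def by auto
  qed simp
  have e3: "(\<Sum>y\<in>Nb. rho i (fst y) * ff m x * (ff m y * lab m n y))
      = (\<Sum>i'\<in>A. rho i i' * ff m x * Wb m n i')"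
  proof -
    have "(\<Sum>y\<in>Nb. rho i (fst y) * ff m x * (ff m y * lab m n y))
        = (\<Sum>i'\<in>A. \<Sum>j'\<in>{0..<2*n+1}. rho i i' * ff m x * (ff m (i',j') * lab m n (i',j')))"
      unfolding Nb_def sum.cartesian_product' fst_conv ..
    also have "\<dots> = (\<Sum>i'\<in>A. rho i i' * ff m x * Wb m n i')"
      unfolding Wb_def by (simp only: sum_distrib_left)
    finally show ?thesis .
  qed
  have "int (4*m*(2*n+1)) dvd (\<Sum>i'\<in>A. rho i i' * ff m x * Wb m n i')"
  proof (rule dvd_sum)
    fix i' assume "i' \<in> A"
    then have "i' < 4*m" unfolding A_def by auto
    then show "int (4*m*(2*n+1)) dvd rho i i' * ff m x * Wb m n i'"
      using Wb_dvd[OF assms(1,2)] by (simp add: dvd_mult)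
  qed
  then show ?thesis using e1 e2 e3 by simp
qed

theorem mainTheorem2:
  fixes m n :: nat
  assumes "m \<ge> 1" and "n \<ge> 1"
  shows "orientable_Zn_distance_magic
           (lex_prod_V {0..<4*m} {0..<2*n+1})
           (lex_prod_E {0..<4*m} (complete_graph_E (4*m)) {0..<2*n+1} (edgeless_graph_E (2*n+1)))"
proof -
  let ?V = "{0..<4*m} \<times> {0..<2*n+1}"
  have cV: "card ?V = 4*m*(2*n+1)" by (simp add: card_cartesian_product)
  have "directed_Zn_distance_magic_labeling ?V (Dor m n) (lab m n)"
    unfolding directed_Zn_distance_magic_labeling_def
  proof (intro conjI exI ballI)
    show "bij_betw (lab m n) ?V {0..<int (card ?V)}" by (rule lab_bij[OF assms])
  next
    fix x assume "x \<in> ?V"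
    then show "[(\<Sum>y\<in>out_nbrs ?V (Dor m n) x. lab m n y) - (\<Sum>y\<in>in_nbrs ?V (Dor m n) x. lab m n y) = 0]
        (mod int (card ?V))"
      unfolding cong_0_iff cV using value_dvd[OF assms] by blast
  qed
  then show ?thesis
    unfolding orientable_Zn_distance_magic_def lex_prod_V_def
    using Dor_orient by blast
qed

end
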